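(* Let $H=\langle a,b,c\mid ac=ca,\ bc=cb,\ [a,b]=c\rangle$ be the integral Heisenberg group, identified with the group of matrices $\begin{bmatrix}1&x&z\\ &1&y\\ &&1\end{bmatrix}$ with $x,y,z\in\mathbb{Z}$, and let $S=\{a,b,a^{-1},b^{-1}\}$ be the generating set. For any $g=\begin{bmatrix}1&x&z\\ &1&y\\ &&1\end{bmatrix}\in H$, the stable word length with respect to $S$ is \[ \mathrm{swl}_S(g)=\lim_{n\to\infty}\frac{|g^n|_S}{n}=|x|+|y|. \]
   Context: Here $|g|_S$ denotes the word length of $g$ with respect to $S$. The proof uses Blachère's formula for word lengths in the Heisenberg group: writing $d(x,y,z)$ for the word length of the matrix with entries $x,y,z$, one has $d(x,y,z)=d(-x,y,-z)=d(x,-y,-z)=d(-x,-y,z)=d(y,x,z)$, and for $z\ge 0$, $x\ge 0$, $x\ge y\ge -x$: if $y\ge 0$, $x\le\sqrt z$ then $d(x,y,z)=2\lceil 2\sqrt z\rceil-x-y$; if $y\ge 0$, $x\ge\sqrt z$ and $xy>z$ then $d(x,y,z)=x+y$. *)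

theory Defs
  imports Complex_Main
begin

text \<open>The integral Heisenberg group: the triple (x, y, z) of integers stands for the
upper unitriangular matrix [[1,x,z],[0,1,y],[0,0,1]]. The product below is exactly
matrix multiplication:
[[1,x,z],[0,1,y],[0,0,1]] * [[1,x',z'],[0,1,y'],[0,0,1]] = [[1,x+x',z+z'+x*y'],[0,1,y+y'],[0,0,1]].\<close>

type_synonym heis = "int \<times> int \<times> int"

definition hmul :: "heis \<Rightarrow> heis \<Rightarrow> heis" where
  "hmul g h = (case g of (x, y, z) \<Rightarrow> case h of (x', y', z') \<Rightarrow>
      (x + x', y + y', z + z' + x * y'))"

definition hone :: heis where "hone = (0, 0, 0)"

definition hinv :: "heis \<Rightarrow> heis" where
  "hinv g = (case g of (x, y, z) \<Rightarrow> (- x, - y, x * y - z))"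

definition gen_a :: heis where "gen_a = (1, 0, 0)"
definition gen_b :: heis where "gen_b = (0, 1, 0)"

definition genS :: "heis set" where
  "genS = {gen_a, gen_b, hinv gen_a, hinv gen_b}"

fun hprod :: "heis list \<Rightarrow> heis" where
  "hprod [] = hone"
| "hprod (s # w) = hmul s (hprod w)"

fun hpow :: "heis \<Rightarrow> nat \<Rightarrow> heis" where
  "hpow g 0 = hone"
| "hpow g (Suc n) = hmul g (hpow g n)"

definition word_length :: "heis \<Rightarrow> nat" where
  "word_length g = (LEAST n. \<exists>w. length w = n \<and> set w \<subseteq> genS \<and> hprod w = g)"

end

theory Submission
  imports Defs "HOL-Library.Discrete_Functions"
begin

lemma hmul_simp: "hmul (a,b,c) (d,e,f) = (a+d, b+e, c+f+a*e)"
  by (simp add: hmul_def)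

lemma hmul_assoc: "hmul (hmul g h) k = hmul g (hmul h k)"
  by (cases g; cases h; cases k) (simp add: hmul_def algebra_simps)

lemma hone_l: "hmul hone g = g"
  by (cases g) (simp add: hmul_def hone_def)

lemma hprod_append: "hprod (w @ v) = hmul (hprod w) (hprod v)"
  by (induction w) (simp_all add: hone_l hmul_assoc)

lemma hprod_rep: "hprod (replicate m s) = hpow s m"
  by (induction m) simp_all

lemma hprod_concat_rep: "hprod (concat (replicate m w)) = hpow (hprod w) m"
  by (induction m) (simp_all add: hprod_append)

lemma hpow_a: "hpow (c,0,0) m = (int m * c, 0, 0)"
  by (induction m) (simp_all add: hmul_def hone_def algebra_simps)

lemma hpow_b: "hpow (0,c,0) m = (0, int m * c, 0)"
  by (induction m) (simp_all add: hmul_def hone_def algebra_simps)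

lemma hpow_c: "hpow (0,0,c) m = (0, 0, int m * c)"
  by (induction m) (simp_all add: hmul_def hone_def algebra_simps)

definition apow :: "int \<Rightarrow> heis list" where
  "apow k = replicate (nat \<bar>k\<bar>) (if k \<ge> 0 then gen_a else hinv gen_a)"
definition bpow :: "int \<Rightarrow> heis list" where
  "bpow k = replicate (nat \<bar>k\<bar>) (if k \<ge> 0 then gen_b else hinv gen_b)"

lemma hprod_apow: "hprod (apow k) = (k,0,0)"
  by (auto simp: apow_def hprod_rep gen_a_def hinv_def hpow_a)

lemma hprod_bpow: "hprod (bpow k) = (0,k,0)"
  by (auto simp: bpow_def hprod_rep gen_b_def hinv_def hpow_b)

lemma set_apow: "set (apow k) \<subseteq> genS"
  by (auto simp: apow_def genS_def)
lemma set_bpow: "set (bpow k) \<subseteq> genS"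
  by (auto simp: bpow_def genS_def)
lemma len_apow: "length (apow k) = nat \<bar>k\<bar>" by (simp add: apow_def)
lemma len_bpow: "length (bpow k) = nat \<bar>k\<bar>" by (simp add: bpow_def)

definition comm :: "int \<Rightarrow> heis list" where
  "comm k = apow k @ bpow k @ apow (-k) @ bpow (-k)"
definition ncomm :: "int \<Rightarrow> heis list" where
  "ncomm k = bpow k @ apow k @ bpow (-k) @ apow (-k)"

lemma hprod_comm: "hprod (comm k) = (0,0,k*k)"
  by (simp add: comm_def hprod_append hprod_apow hprod_bpow hmul_simp)
lemma hprod_ncomm: "hprod (ncomm k) = (0,0,-(k*k))"
  by (simp add: ncomm_def hprod_append hprod_apow hprod_bpow hmul_simp)
lemma set_comm: "set (comm k) \<subseteq> genS" "set (ncomm k) \<subseteq> genS"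
  using set_apow set_bpow by (auto simp: comm_def ncomm_def)
lemma len_comm: "length (comm k) = 4 * nat \<bar>k\<bar>" "length (ncomm k) = 4 * nat \<bar>k\<bar>"
  by (simp_all add: comm_def ncomm_def len_apow len_bpow)

lemma central_word:
  fixes W :: int
  shows "\<exists>w. set w \<subseteq> genS \<and> hprod w = (0,0,W) \<and> real (length w) \<le> 12 * sqrt \<bar>W\<bar>"
proof -
  define m where "m = nat \<bar>W\<bar>"
  define k where "k = floor_sqrt m"
  have k1: "k*k \<le> m" unfolding k_def using floor_sqrt_power2_le[of m] by (simp only: power2_eq_square)
  have k2: "m < (Suc k)*(Suc k)" unfolding k_def using Suc_floor_sqrt_power2_gt[of m] by (simp only: power2_eq_square)
  define r where "r = m - k*k"
  have mr: "m = k*k + r" using k1 unfolding r_def by simp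
  have "Suc k * Suc k = k*k + 2*k + 1" by simp
  then have r2: "r \<le> 2*k" using k2 mr by linarith
  have kr: "real k \<le> sqrt \<bar>W\<bar>"
  proof -
    have "real (k*k) \<le> real m" using k1 by linarith
    moreover have "real m = \<bar>real_of_int W\<bar>" unfolding m_def by simp
    ultimately have "(real k)^2 \<le> \<bar>real_of_int W\<bar>" by (simp add: power2_eq_square)
    then have "real k \<le> sqrt \<bar>real_of_int W\<bar>" by (rule real_le_rsqrt)
    then show ?thesis by simp
  qed
  have "int m = int (k*k+r)" using mr by (rule arg_cong)
  then have Wm: "\<bar>W\<bar> = int k * int k + int r" unfolding m_def by simp
  have "real r \<le> 2 * real k" using r2 by linarith
  then have len: "real (4*k + 4*r) \<le> 12 * sqrt \<bar>W\<bar>" using kr by simp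
  show ?thesis
  proof (cases "W \<ge> 0")
    case True
    define w where "w = comm (int k) @ concat (replicate r (comm 1))"
    have "hprod w = hmul (0,0,int k * int k) (0,0,int r * (1*1))"
      unfolding w_def by (simp only: hprod_append hprod_concat_rep hprod_comm hpow_c)
    also have "\<dots> = (0,0,W)" using True Wm by (simp add: hmul_simp)
    finally have "hprod w = (0,0,W)" .
    moreover have "set w \<subseteq> genS" using set_comm[of "int k"] set_comm[of 1] unfolding w_def by (simp add: subset_iff)
    moreover have "length w = 4*k + 4*r"
      unfolding w_def by (simp add: len_comm length_concat sum_list_replicate)
    ultimately show ?thesis using len by (intro exI[of _ w]) simp
  next
    case False
    define w where "w = ncomm (int k) @ concat (replicate r (ncomm 1))"
    have "hprod w = hmul (0,0,-(int k * int k)) (0,0,int r * (-(1*1)))"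
      unfolding w_def by (simp only: hprod_append hprod_concat_rep hprod_ncomm hpow_c)
    also have "\<dots> = (0,0,W)" using False Wm by (simp add: hmul_simp)
    finally have "hprod w = (0,0,W)" .
    moreover have "set w \<subseteq> genS" using set_comm[of "int k"] set_comm[of 1] unfolding w_def by (simp add: subset_iff)
    moreover have "length w = 4*k + 4*r"
      unfolding w_def by (simp add: len_comm length_concat sum_list_replicate)
    ultimately show ?thesis using len by (intro exI[of _ w]) simp
  qed
qed

lemma lower: "set w \<subseteq> genS \<Longrightarrow>
   \<bar>fst (hprod w)\<bar> + \<bar>fst (snd (hprod w))\<bar> \<le> int (length w)"
proof (induction w)
  case Nil then show ?case by (simp add: hone_def)
next
  case (Cons s w)
  obtain p q t where P: "hprod w = (p,q,t)" by (cases "hprod w") auto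
  from Cons have IH: "\<bar>p\<bar> + \<bar>q\<bar> \<le> int (length w)" using P by simp
  from Cons.prems have "s \<in> genS" by simp
  then show ?case using IH P
    by (auto simp: genS_def gen_a_def gen_b_def hinv_def hmul_simp)
qed

lemma hpow_fst: "fst (hpow (x,y,z) n) = int n * x \<and> fst (snd (hpow (x,y,z) n)) = int n * y"
proof (induction n)
  case 0 then show ?case by (simp add: hone_def)
next
  case (Suc n)
  obtain p q t where P: "hpow (x,y,z) n = (p,q,t)" by (cases "hpow (x,y,z) n") auto
  then show ?case using Suc by (simp add: hmul_simp algebra_simps)
qed

lemma hpow_decomp: "hpow (x,y,z) n = hmul (hpow (x,y,x*y) n) (0,0,int n*(z - x*y))"
proof (induction n)
  case 0 then show ?case by (simp add: hone_def hmul_simp)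
next
  case (Suc n)
  obtain p q t where P: "hpow (x,y,x*y) n = (p,q,t)" by (cases "hpow (x,y,x*y) n") auto
  then show ?case using Suc by (simp add: hmul_simp algebra_simps)
qed

lemma upper_word: "\<exists>w. set w \<subseteq> genS \<and> hprod w = hpow (x,y,z) n \<and>
   real (length w) \<le> real n * (\<bar>x\<bar> + \<bar>y\<bar>) + 12 * sqrt (real n * \<bar>z - x*y\<bar>)"
proof -
  obtain v where v: "set v \<subseteq> genS" "hprod v = (0,0,int n*(z - x*y))"
     "real (length v) \<le> 12 * sqrt (real_of_int \<bar>int n*(z - x*y)\<bar>)"
    using central_word[of "int n*(z - x*y)"] by (elim exE conjE) blast
  define u where "u = apow x @ bpow y"
  have hu: "hprod u = (x,y,x*y)" unfolding u_def by (simp add: hprod_append hprod_apow hprod_bpow hmul_simp)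
  define w where "w = concat (replicate n u) @ v"
  have "hprod w = hpow (x,y,z) n"
    unfolding w_def hpow_decomp[of x y z n] by (simp only: hprod_append hprod_concat_rep hu v)
  moreover have "set w \<subseteq> genS" using v set_apow set_bpow unfolding w_def u_def by auto
  moreover have "length w = n * (nat \<bar>x\<bar> + nat \<bar>y\<bar>) + length v"
    unfolding w_def u_def by (simp add: length_concat sum_list_replicate len_apow len_bpow)
  moreover have "real_of_int \<bar>int n*(z - x*y)\<bar> = real n * \<bar>z - x*y\<bar>"
    by (simp add: abs_mult)
  ultimately show ?thesis using v(3) by (intro exI[of _ w]) simp
qed

theorem corollary23:
  fixes x y z :: int
  shows "(\<lambda>n. real (word_length (hpow (x, y, z) n)) / real n)
           \<longlonglongrightarrow> real_of_int (\<bar>x\<bar> + \<bar>y\<bar>)"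
proof -
  define d where "d = real_of_int \<bar>z - x*y\<bar>"
  have up: "real (word_length (hpow (x,y,z) n)) \<le> real n * (\<bar>x\<bar> + \<bar>y\<bar>) + 12 * sqrt (real n * d)" for n
  proof -
    obtain w where w: "set w \<subseteq> genS" "hprod w = hpow (x,y,z) n"
      "real (length w) \<le> real n * (\<bar>x\<bar> + \<bar>y\<bar>) + 12 * sqrt (real n * \<bar>z - x*y\<bar>)"
      using upper_word[of x y z n] by (elim exE conjE) blast
    have "word_length (hpow (x,y,z) n) \<le> length w"
      unfolding word_length_def using w by (intro Least_le) blast
    then show ?thesis using w(3) unfolding d_def by linarith
  qed
  have lo: "real n * (\<bar>x\<bar> + \<bar>y\<bar>) \<le> real (word_length (hpow (x,y,z) n))" for n
  proof -
    obtain w0 where "set w0 \<subseteq> genS" "hprod w0 = hpow (x,y,z) n"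
      using upper_word[of x y z n] by (elim exE conjE) blast
    then have "\<exists>w. length w = length w0 \<and> set w \<subseteq> genS \<and> hprod w = hpow (x,y,z) n" by blast
    then have "\<exists>w. length w = word_length (hpow (x,y,z) n) \<and> set w \<subseteq> genS \<and> hprod w = hpow (x,y,z) n"
      unfolding word_length_def by (rule LeastI)
    then obtain w where w: "length w = word_length (hpow (x,y,z) n)" "set w \<subseteq> genS"
       "hprod w = hpow (x,y,z) n" by blast
    have "\<bar>int n * x\<bar> + \<bar>int n * y\<bar> \<le> int (length w)"
      using lower[OF w(2)] w(3) hpow_fst[of x y z n] by simp
    then have "int n * (\<bar>x\<bar> + \<bar>y\<bar>) \<le> int (length w)" by (simp add: abs_mult algebra_simps)
    then have "real_of_int (int n * (\<bar>x\<bar> + \<bar>y\<bar>)) \<le> real (length w)" by linarith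
    then show ?thesis using w(1) by simp
  qed
  have d0: "d \<ge> 0" unfolding d_def by simp
  have lim: "(\<lambda>n. real_of_int (\<bar>x\<bar> + \<bar>y\<bar>) + 12 * sqrt d / sqrt (real n)) \<longlonglongrightarrow> real_of_int (\<bar>x\<bar> + \<bar>y\<bar>) + 0"
  proof (rule tendsto_add[OF tendsto_const])
    show "(\<lambda>n. 12 * sqrt d / sqrt (real n)) \<longlonglongrightarrow> 0"
      by (rule tendsto_divide_0[OF tendsto_const])
        (rule filterlim_at_top_imp_at_infinity,
         rule filterlim_compose[OF sqrt_at_top filterlim_real_sequentially])
  qed
  show ?thesis
  proof (rule tendsto_sandwich[where f="\<lambda>n. real_of_int (\<bar>x\<bar> + \<bar>y\<bar>)" and h="\<lambda>n. real_of_int (\<bar>x\<bar> + \<bar>y\<bar>) + 12 * sqrt d / sqrt (real n)"])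
    show "\<forall>\<^sub>F n in sequentially. real_of_int (\<bar>x\<bar> + \<bar>y\<bar>) \<le> real (word_length (hpow (x, y, z) n)) / real n"
      using eventually_gt_at_top[of "0::nat"]
    proof eventually_elim
      case (elim n)
      then show ?case using lo[of n] by (simp add: field_simps)
    qed
    show "\<forall>\<^sub>F n in sequentially. real (word_length (hpow (x, y, z) n)) / real n \<le> real_of_int (\<bar>x\<bar> + \<bar>y\<bar>) + 12 * sqrt d / sqrt (real n)"
      using eventually_gt_at_top[of "0::nat"]
    proof eventually_elim
      case (elim n)
      have s: "sqrt (real n * d) = sqrt (real n) * sqrt d" by (simp add: real_sqrt_mult)
      have sn: "sqrt (real n) * sqrt (real n) = real n" by simp
      have "real (word_length (hpow (x, y, z) n)) / real n \<le> (real n * (\<bar>x\<bar> + \<bar>y\<bar>) + 12 * sqrt (real n * d)) / real n"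
        using up[of n] elim by (simp add: divide_right_mono)
      also have "\<dots> = real_of_int (\<bar>x\<bar> + \<bar>y\<bar>) + 12 * sqrt d / sqrt (real n)"
        using elim unfolding s by (simp add: field_simps)
      finally show ?case .
    qed
    show "(\<lambda>n. real_of_int (\<bar>x\<bar> + \<bar>y\<bar>)) \<longlonglongrightarrow> real_of_int (\<bar>x\<bar> + \<bar>y\<bar>)" by simp
    show "(\<lambda>n. real_of_int (\<bar>x\<bar> + \<bar>y\<bar>) + 12 * sqrt d / sqrt (real n)) \<longlonglongrightarrow> real_of_int (\<bar>x\<bar> + \<bar>y\<bar>)"
      using lim by simp
  qed
qed

end
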